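(* Let $(\mathcal Q,d)$ be a Hadamard space, $Y$ a $\mathcal Q$-valued random variable, $o\in\mathcal Q$, and $m\in\arg\min_{q\in\mathcal Q}\mathbb E[d(Y,q)-d(Y,o)]$. Let $\gamma:I\to\mathcal Q$ be a unit-speed geodesic on a closed interval $I$ with $0\in I$, $\gamma(0)=m$, and $\mathbb P(Y\in\gamma(I))=1$. Let $q\in\mathcal Q$. Then the projection $p:=\arg\min_{z\in\gamma(I)}d(q,z)$ exists and is unique; assume (after possibly reversing the orientation of $\gamma$) that $\gamma^{-1}(p)\ge0$. Define $a_-:=\mathbb P(\gamma^{-1}(Y)<0)$, $a_0:=\mathbb P(Y=m)$, $a_+:=\mathbb P(\gamma^{-1}(Y)>0)$. Then $$\mathbb E[d(Y,q)-d(Y,m)]\ \ge\ d(q,m)\,a_0+d(p,m)\,(a_--a_+)+\mathbb E\Big[\big(d(q,p)+d(p,m)-d(Y,m)\big)\mathbf 1_{(0,\,d(q,p)+d(p,m)]}\big(\gamma^{-1}(Y)\big)\Big].$$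
   Context: A Hadamard space is a complete metric space $(\mathcal Q,d)$ such that for all $y_0,y_1$ there is $m$ with $\frac12 d(y_0,q)^2+\frac12 d(y_1,q)^2-\frac14 d(y_0,y_1)^2\ge d(q,m)^2$ for all $q$. A unit-speed geodesic is a map $\gamma:I\to\mathcal Q$ on an interval with $d(\gamma(s),\gamma(t))=|s-t|$; it is injective, so $\gamma^{-1}$ is defined on its image. *)

theory Defs
  imports "HOL-Probability.Probability"
begin

definition hadamard_space :: "'a::metric_space set \<Rightarrow> bool" where
  "hadamard_space Q \<longleftrightarrow> Topological_Spaces.complete Q \<and>
     (\<forall>y0\<in>Q. \<forall>y1\<in>Q. \<exists>m\<in>Q. \<forall>q\<in>Q.
        (1/2) * (dist y0 q)\<^sup>2 + (1/2) * (dist y1 q)\<^sup>2 - (1/4) * (dist y0 y1)\<^sup>2 \<ge> (dist q m)\<^sup>2)"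

definition unit_speed_geodesic :: "real set \<Rightarrow> (real \<Rightarrow> 'a::metric_space) \<Rightarrow> bool" where
  "unit_speed_geodesic I \<gamma> \<longleftrightarrow> is_interval I \<and> (\<forall>s\<in>I. \<forall>t\<in>I. dist (\<gamma> s) (\<gamma> t) = \<bar>s - t\<bar>)"

end

theory Submission
  imports Defs
begin


lemma mid_in:
  assumes iv: "is_interval (I::real set)" and a: "a \<in> I" and b: "b \<in> I"
  shows "(a+b)/2 \<in> I"
proof (cases "a \<le> b")
  case True
  have "a \<le> (a+b)/2" "(a+b)/2 \<le> b" using True by auto
  thus ?thesis using iv a b unfolding is_interval_1 by blast
next
  case False
  have "b \<le> (a+b)/2" "(a+b)/2 \<le> a" using False by auto
  thus ?thesis using iv a b unfolding is_interval_1 by blast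
qed

lemma geod_mid:
  fixes \<gamma> :: "real \<Rightarrow> 'a::metric_space"
  assumes had: "hadamard_space (UNIV :: 'a set)" and geod: "unit_speed_geodesic I \<gamma>"
    and a: "a \<in> I" and b: "b \<in> I"
  shows "(dist x (\<gamma> ((a+b)/2)))\<^sup>2 \<le> (1/2) * (dist (\<gamma> a) x)\<^sup>2 + (1/2) * (dist (\<gamma> b) x)\<^sup>2 - (1/4) * (a-b)\<^sup>2"
proof -
  have iv: "is_interval I" and iso: "\<forall>s\<in>I. \<forall>t\<in>I. dist (\<gamma> s) (\<gamma> t) = \<bar>s - t\<bar>"
    using geod unfolding unit_speed_geodesic_def by auto
  have w: "(a+b)/2 \<in> I" by (rule mid_in[OF iv a b])
  obtain mp where mp: "\<forall>q. (1/2) * (dist (\<gamma> a) q)\<^sup>2 + (1/2) * (dist (\<gamma> b) q)\<^sup>2 - (1/4) * (dist (\<gamma> a) (\<gamma> b))\<^sup>2 \<ge> (dist q mp)\<^sup>2"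
    using had unfolding hadamard_space_def by blast
  have dab: "dist (\<gamma> a) (\<gamma> b) = \<bar>a - b\<bar>" using iso a b by auto
  have e1: "\<bar>a - (a+b)/2\<bar> = \<bar>a-b\<bar>/2" "\<bar>b - (a+b)/2\<bar> = \<bar>a-b\<bar>/2" by (simp_all add: abs_if field_simps)
  have d1: "dist (\<gamma> a) (\<gamma> ((a+b)/2)) = \<bar>a-b\<bar>/2" using iso a w e1 by auto
  have d2: "dist (\<gamma> b) (\<gamma> ((a+b)/2)) = \<bar>a-b\<bar>/2" using iso b w e1 by auto
  have "(dist (\<gamma> ((a+b)/2)) mp)\<^sup>2 \<le> 0"
    using mp[rule_format, of "\<gamma> ((a+b)/2)"] unfolding dab d1 d2 by (simp add: power2_eq_square field_simps)
  hence "\<gamma> ((a+b)/2) = mp" by simp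
  thus ?thesis using mp[rule_format, of x] dab by (simp add: power2_abs)
qed

lemma proj_ineq_k:
  fixes \<gamma> :: "real \<Rightarrow> 'a::metric_space"
  assumes had: "hadamard_space (UNIV :: 'a set)" and geod: "unit_speed_geodesic I \<gamma>"
    and s: "s \<in> I" and mn: "\<forall>u\<in>I. dist q (\<gamma> s) \<le> dist q (\<gamma> u)"
  shows "\<forall>u\<in>I. (dist q (\<gamma> u))\<^sup>2 \<ge> (dist q (\<gamma> s))\<^sup>2 + (1 - (1/2)^k) * (u-s)\<^sup>2"
proof (induction k)
  case 0
  then show ?case using mn by (simp add: power_mono)
next
  case (Suc k)
  show ?case
  proof
    fix u assume u: "u \<in> I"
    have iv: "is_interval I" using geod unfolding unit_speed_geodesic_def by auto
    have w: "(s+u)/2 \<in> I"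
      by (rule mid_in[OF iv s u])
    have A1: "(dist q (\<gamma> ((s+u)/2)))\<^sup>2 \<ge> (dist q (\<gamma> s))\<^sup>2 + (1 - (1/2)^k) * ((s+u)/2-s)\<^sup>2"
      using Suc w by blast
    have A2: "(dist q (\<gamma> ((s+u)/2)))\<^sup>2 \<le> (1/2) * (dist (\<gamma> s) q)\<^sup>2 + (1/2) * (dist (\<gamma> u) q)\<^sup>2 - (1/4) * (s-u)\<^sup>2"
      by (rule geod_mid[OF had geod s u])
    have e: "((s+u)/2-s)\<^sup>2 = (u-s)\<^sup>2/4" "(s-u)\<^sup>2 = (u-s)\<^sup>2" by (simp_all add: power2_eq_square field_simps)
    have "(1 - (1/2::real)^Suc k) * (u-s)\<^sup>2 = (u-s)\<^sup>2 - (1/2)^k * (u-s)\<^sup>2 / 2" by (simp add: field_simps)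
    moreover have "(1 - (1/2::real)^k) * ((u-s)\<^sup>2/4) = (u-s)\<^sup>2/4 - (1/2)^k * (u-s)\<^sup>2 / 4" by (simp add: field_simps)
    ultimately show "(dist q (\<gamma> u))\<^sup>2 \<ge> (dist q (\<gamma> s))\<^sup>2 + (1 - (1/2)^Suc k) * (u-s)\<^sup>2"
      using A1 A2 unfolding e dist_commute[of "\<gamma> s" q] dist_commute[of "\<gamma> u" q] by linarith
  qed
qed

lemma proj_ineq:
  fixes \<gamma> :: "real \<Rightarrow> 'a::metric_space"
  assumes had: "hadamard_space (UNIV :: 'a set)" and geod: "unit_speed_geodesic I \<gamma>"
    and s: "s \<in> I" and mn: "\<forall>u\<in>I. dist q (\<gamma> s) \<le> dist q (\<gamma> u)" and u: "u \<in> I"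
  shows "(dist q (\<gamma> u))\<^sup>2 \<ge> (dist q (\<gamma> s))\<^sup>2 + (u-s)\<^sup>2"
proof (rule ccontr)
  define R H D where "R = (dist q (\<gamma> u))\<^sup>2" "H = (dist q (\<gamma> s))\<^sup>2" "D = (u-s)\<^sup>2"
  assume "\<not> ?thesis"
  hence lt: "R < H + D" unfolding R_H_D_def by simp
  have "D \<ge> 0" unfolding R_H_D_def by simp
  have k: "\<forall>k. R \<ge> H + (1 - (1/2)^k) * D" using proj_ineq_k[OF had geod s mn] u unfolding R_H_D_def by blast
  have "D > 0" using k[rule_format, of 0] lt by simp
  then obtain k where "(1/2::real)^k < (H + D - R) / D" using real_arch_pow_inv[of "(H + D - R) / D" "1/2"] lt by auto
  hence "(1/2::real)^k * D < H + D - R" using \<open>D > 0\<close> by (simp add: field_simps)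
  thus False using k[rule_format, of k] by (simp add: algebra_simps)
qed

theorem mainTheorem14:
  fixes M :: "'s measure" and Y :: "'s \<Rightarrow> 'a::metric_space"
    and o' m q :: 'a and \<gamma> :: "real \<Rightarrow> 'a" and I :: "real set"
  assumes hadamard: "hadamard_space (UNIV :: 'a set)"
    and prob: "prob_space M"
    and Y_rv: "Y \<in> borel_measurable M"
    and m_min: "\<forall>z. prob_space.expectation M (\<lambda>\<omega>. dist (Y \<omega>) m - dist (Y \<omega>) o')
                  \<le> prob_space.expectation M (\<lambda>\<omega>. dist (Y \<omega>) z - dist (Y \<omega>) o')"
    and geod: "unit_speed_geodesic I \<gamma>"
    and I_closed: "closed I"
    and zero_I: "0 \<in> I"
    and gamma0: "\<gamma> 0 = m"
    and Y_on: "AE \<omega> in M. Y \<omega> \<in> \<gamma> ` I"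
  shows "(\<exists>!p. p \<in> \<gamma> ` I \<and> (\<forall>z\<in>\<gamma> ` I. dist q p \<le> dist q z))
    \<and> (\<forall>p. p \<in> \<gamma> ` I \<and> (\<forall>z\<in>\<gamma> ` I. dist q p \<le> dist q z) \<and> inv_into I \<gamma> p \<ge> 0 \<longrightarrow>
        prob_space.expectation M (\<lambda>\<omega>. dist (Y \<omega>) q - dist (Y \<omega>) m)
        \<ge> dist q m * prob_space.prob M {\<omega>\<in>space M. Y \<omega> = m}
          + dist p m * (prob_space.prob M {\<omega>\<in>space M. inv_into I \<gamma> (Y \<omega>) < 0}
                        - prob_space.prob M {\<omega>\<in>space M. inv_into I \<gamma> (Y \<omega>) > 0})
          + prob_space.expectation M (\<lambda>\<omega>.
              (dist q p + dist p m - dist (Y \<omega>) m)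
              * indicator {0<..dist q p + dist p m} (inv_into I \<gamma> (Y \<omega>))))"
proof -
  interpret P: prob_space M by (rule prob)
  have iv: "is_interval I" and iso: "\<forall>s\<in>I. \<forall>t\<in>I. dist (\<gamma> s) (\<gamma> t) = \<bar>s - t\<bar>"
    using geod unfolding unit_speed_geodesic_def by auto
  have inj: "inj_on \<gamma> I"
  proof (rule inj_onI)
    fix x y assume "x \<in> I" "y \<in> I" "\<gamma> x = \<gamma> y"
    thus "x = y" using iso by force
  qed
  have inv: "\<And>t. t\<in>I \<Longrightarrow> inv_into I \<gamma> (\<gamma> t) = t" using inj by (simp add: inv_into_f_f)
  have contg: "continuous_on I \<gamma>"
  proof (clarsimp simp: continuous_on_iff)
    fix x e :: real assume x: "x \<in> I" and e: "0 < e"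
    show "\<exists>d>0. \<forall>x'\<in>I. dist x' x < d \<longrightarrow> dist (\<gamma> x') (\<gamma> x) < e"
      using iso x e by (intro exI[of _ e]) (auto simp: dist_real_def)
  qed
  have dm: "\<And>t. t \<in> I \<Longrightarrow> dist (\<gamma> t) m = \<bar>t\<bar>" using iso zero_I gamma0 by force
  define r where "r = 2 * dist q m"
  define K where "K = I \<inter> {-r..r}"
  have "compact K" unfolding K_def using I_closed by (simp add: closed_Int_compact)
  moreover have K0: "0 \<in> K" using zero_I unfolding K_def r_def by auto
  moreover have "continuous_on K (\<lambda>t. dist q (\<gamma> t))"
    using continuous_on_subset[OF contg] unfolding K_def by (intro continuous_intros) auto
  ultimately obtain t0 where t0: "t0 \<in> K" "\<forall>y\<in>K. dist q (\<gamma> t0) \<le> dist q (\<gamma> y)"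
    using continuous_attains_inf[of K "\<lambda>t. dist q (\<gamma> t)"] by blast
  have minI: "\<forall>u\<in>I. dist q (\<gamma> t0) \<le> dist q (\<gamma> u)"
  proof
    fix u assume u: "u \<in> I"
    show "dist q (\<gamma> t0) \<le> dist q (\<gamma> u)"
    proof (cases "u \<in> K")
      case True thus ?thesis using t0 by blast
    next
      case False
      hence "\<bar>u\<bar> > r" using u unfolding K_def by auto
      moreover have "\<bar>u\<bar> \<le> dist q (\<gamma> u) + dist q m"
        using dm[OF u] dist_triangle[of "\<gamma> u" m q] by (simp add: dist_commute)
      moreover have "dist q (\<gamma> t0) \<le> dist q m" using t0(2) K0 gamma0 by force
      ultimately show ?thesis unfolding r_def by linarith
    qed
  qed
  have t0I: "t0 \<in> I" using t0 unfolding K_def by auto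
  have ex: "\<exists>p. p \<in> \<gamma> ` I \<and> (\<forall>z\<in>\<gamma> ` I. dist q p \<le> dist q z)"
    using minI t0I by blast
  have uniq: "p1 = p2" if U: "p1 \<in> \<gamma> ` I" "\<forall>z\<in>\<gamma> ` I. dist q p1 \<le> dist q z"
     "p2 \<in> \<gamma> ` I" "\<forall>z\<in>\<gamma> ` I. dist q p2 \<le> dist q z" for p1 p2
  proof -
    obtain s1 s2 where s: "s1 \<in> I" "s2 \<in> I" "p1 = \<gamma> s1" "p2 = \<gamma> s2" using U by blast
    have mn: "\<forall>u\<in>I. dist q (\<gamma> s1) \<le> dist q (\<gamma> u)" using U(2) s by auto
    have a: "(dist q p2)\<^sup>2 \<ge> (dist q p1)\<^sup>2 + (s2-s1)\<^sup>2" using proj_ineq[OF hadamard geod s(1) mn s(2)] s by simp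
    have "dist q p2 \<le> dist q p1" using U by blast
    hence "(dist q p2)\<^sup>2 \<le> (dist q p1)\<^sup>2" by (simp add: power_mono)
    hence "(s2-s1)\<^sup>2 \<le> 0" using a by linarith
    hence "s1 = s2" by simp
    thus ?thesis using s by simp
  qed
  have part1: "\<exists>!p. p \<in> \<gamma> ` I \<and> (\<forall>z\<in>\<gamma> ` I. dist q p \<le> dist q z)"
    using ex uniq by blast
  define \<phi> where "\<phi> = inv_into I \<gamma>"
  define C where "C = \<gamma> ` I"
  have Cunion: "C = (\<Union>n::nat. \<gamma> ` (I \<inter> {-real n..real n}))"
  proof
    show "C \<subseteq> (\<Union>n::nat. \<gamma> ` (I \<inter> {-real n..real n}))"
    proof
      fix x assume "x \<in> C"
      then obtain t where t: "t \<in> I" "x = \<gamma> t" unfolding C_def by blast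
      obtain n::nat where "\<bar>t\<bar> \<le> real n" using real_arch_simple by blast
      hence "t \<in> I \<inter> {-real n..real n}" using t by auto
      thus "x \<in> (\<Union>n::nat. \<gamma> ` (I \<inter> {-real n..real n}))" using t by blast
    qed
  qed (auto simp: C_def)
  have Cb: "C \<in> sets borel"
  proof -
    have "\<gamma> ` (I \<inter> {-real n..real n}) \<in> sets borel" for n::nat
    proof -
      have "compact (I \<inter> {-real n..real n})" using I_closed by (simp add: closed_Int_compact)
      moreover have "continuous_on (I \<inter> {-real n..real n}) \<gamma>" using continuous_on_subset[OF contg] by auto
      ultimately have "compact (\<gamma> ` (I \<inter> {-real n..real n}))" by (rule compact_continuous_image[rotated])
      thus ?thesis by (intro borel_closed compact_imp_closed)
    qed
    thus ?thesis unfolding Cunion by auto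
  qed
  have contC: "continuous_on C \<phi>"
  proof (clarsimp simp: continuous_on_iff C_def)
    fix x e assume x: "x \<in> I" and e: "(0::real) < e"
    show "\<exists>d>0. \<forall>x'\<in>I. dist (\<gamma> x') (\<gamma> x) < d \<longrightarrow> dist (\<phi> (\<gamma> x')) (\<phi> (\<gamma> x)) < e"
      using iso x e inv unfolding \<phi>_def by (intro exI[of _ e]) (auto simp: dist_real_def)
  qed
  have contNC: "continuous_on (- C) \<phi>"
  proof -
    have "\<forall>x\<in>- C. \<phi> x = (SOME y::real. False)"
    proof
      fix x assume "x \<in> - C"
      hence "(\<lambda>y. y \<in> I \<and> \<gamma> y = x) = (\<lambda>y. False)" unfolding C_def by auto
      thus "\<phi> x = (SOME y::real. False)" unfolding \<phi>_def inv_into_def by simp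
    qed
    thus ?thesis using continuous_on_cong[of "- C" "- C" \<phi> "\<lambda>_. SOME y::real. False"] continuous_on_const by auto
  qed
  have phim: "\<phi> \<in> borel_measurable borel"
    using borel_measurable_continuous_on_if[OF Cb contC contNC] by simp
  have Tm[measurable]: "(\<lambda>\<omega>. \<phi> (Y \<omega>)) \<in> borel_measurable M"
    by (rule measurable_compose[OF Y_rv phim])
  note Y_rv[measurable]
  have distm: "(\<lambda>\<omega>. dist (Y \<omega>) z) \<in> borel_measurable M" for z
  proof -
    have "(\<lambda>y. dist y z) \<in> borel_measurable borel"
      by (rule borel_measurable_continuous_onI) (intro continuous_intros)
    thus ?thesis by (rule measurable_compose[OF Y_rv])
  qed
  note distm[measurable]
  show ?thesis
  proof (intro conjI part1 allI impI)
    fix p assume pa: "p \<in> \<gamma> ` I \<and> (\<forall>z\<in>\<gamma> ` I. dist q p \<le> dist q z) \<and> inv_into I \<gamma> p \<ge> 0"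
    define s where "s = \<phi> p"
    have sI: "s \<in> I" and ps: "\<gamma> s = p" using pa unfolding s_def \<phi>_def by (auto intro: inv_into_into f_inv_into_f)
    have s0: "s \<ge> 0" using pa unfolding s_def \<phi>_def by simp
    have mnS: "\<forall>u\<in>I. dist q (\<gamma> s) \<le> dist q (\<gamma> u)" using pa ps by auto
    have dpm: "dist p m = s" using dm[OF sI] ps s0 by simp
    define h where "h = dist q p"
    define L where "L = h + s"
    have h0: "h \<ge> 0" unfolding h_def by simp
    define A0 where "A0 = {\<omega>\<in>space M. Y \<omega> = m}"
    define Am where "Am = {\<omega>\<in>space M. \<phi> (Y \<omega>) < 0}"
    define Ap where "Ap = {\<omega>\<in>space M. \<phi> (Y \<omega>) > 0}"
    have A0s: "A0 \<in> sets M"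
    proof -
      have "{m} \<in> sets borel" by (intro borel_closed) simp
      hence "Y -` {m} \<inter> space M \<in> sets M" by (rule measurable_sets[OF Y_rv])
      moreover have "A0 = Y -` {m} \<inter> space M" unfolding A0_def by auto
      ultimately show ?thesis by simp
    qed
    have Ams: "Am \<in> sets M" unfolding Am_def by measurable
    have Aps: "Ap \<in> sets M" unfolding Ap_def by measurable
    have fin: "\<And>A. emeasure M A < \<infinity>" using P.emeasure_finite by (simp add: less_top[symmetric])
    define G where "G = (\<lambda>\<omega>. dist (Y \<omega>) q - dist (Y \<omega>) m)"
    define Lst where "Lst = (\<lambda>\<omega>. (L - dist (Y \<omega>) m) * indicator {0<..L} (\<phi> (Y \<omega>)))"
    define H where "H = (\<lambda>\<omega>. dist q m * indicator A0 \<omega> + s * indicator Am \<omega> - s * indicator Ap \<omega> + (Lst \<omega> :: real))"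
    have Gi: "integrable M G"
    proof (rule P.integrable_const_bound[where B="dist q m"])
      show "AE x in M. norm (G x) \<le> dist q m"
      proof (rule AE_I2)
        fix x
        show "norm (G x) \<le> dist q m" unfolding G_def
          using dist_triangle[of "Y x" q m] dist_triangle[of "Y x" m q] dist_commute[of q m] by simp
      qed
      show "G \<in> borel_measurable M" unfolding G_def by measurable
    qed
    have Lm: "Lst \<in> borel_measurable M" unfolding Lst_def by measurable
    have Li: "integrable M Lst"
    proof (rule P.integrable_const_bound[where B="L"])
      show "AE x in M. norm (Lst x) \<le> L"
        using Y_on
      proof (rule AE_mp)
        show "AE x in M. Y x \<in> \<gamma> ` I \<longrightarrow> norm (Lst x) \<le> L"
        proof (rule AE_I2, rule impI)
          fix x assume "Y x \<in> \<gamma> ` I"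
          then obtain t where t: "t \<in> I" "Y x = \<gamma> t" by blast
          have "\<phi> (Y x) = t" using inv[OF t(1)] t unfolding \<phi>_def by simp
          thus "norm (Lst x) \<le> L" unfolding Lst_def using dm[OF t(1)] t h0 s0 unfolding L_def
            by (auto simp: indicator_def)
        qed
      qed
    qed (rule Lm)
    have i1: "integrable M (\<lambda>\<omega>. dist q m * indicator A0 \<omega> :: real)"
      by (rule integrable_mult_right) (rule integrable_real_indicator[OF A0s fin])
    have i2: "integrable M (\<lambda>\<omega>. s * indicator Am \<omega> :: real)"
      by (rule integrable_mult_right) (rule integrable_real_indicator[OF Ams fin])
    have i3: "integrable M (\<lambda>\<omega>. s * indicator Ap \<omega> :: real)"
      by (rule integrable_mult_right) (rule integrable_real_indicator[OF Aps fin])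
    have Hi: "integrable M H" unfolding H_def
      using Bochner_Integration.integrable_add[OF Bochner_Integration.integrable_diff[OF Bochner_Integration.integrable_add[OF i1 i2] i3] Li] by simp
    have AEle: "AE \<omega> in M. H \<omega> \<le> G \<omega>"
      using Y_on
    proof (rule AE_mp)
      show "AE x in M. Y x \<in> \<gamma> ` I \<longrightarrow> H x \<le> G x"
      proof (rule AE_I2, rule impI)
        fix x assume xs: "x \<in> space M" and "Y x \<in> \<gamma> ` I"
        then obtain t where t: "t \<in> I" "Y x = \<gamma> t" by blast
        have pt: "\<phi> (Y x) = t" using inv[OF t(1)] t unfolding \<phi>_def by simp
        have dYm: "dist (Y x) m = \<bar>t\<bar>" using dm[OF t(1)] t by simp
        have eqm: "Y x = m \<longleftrightarrow> t = 0" using t inj zero_I gamma0 by (metis inj_on_eq_iff)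
        have d1: "dist (Y x) q \<ge> h" using mnS t ps unfolding h_def by (simp add: dist_commute)
        have sq: "(dist q (\<gamma> t))\<^sup>2 \<ge> (dist q (\<gamma> s))\<^sup>2 + (t-s)\<^sup>2" by (rule proj_ineq[OF hadamard geod sI mnS t(1)])
        have "\<bar>t - s\<bar>\<^sup>2 \<le> (dist q (\<gamma> t))\<^sup>2" using sq zero_le_power2[of "dist q (\<gamma> s)"] unfolding power2_abs by linarith
        hence "\<bar>t - s\<bar> \<le> dist q (\<gamma> t)" by (rule power2_le_imp_le) simp
        hence d2: "dist (Y x) q \<ge> \<bar>t - s\<bar>" using t by (simp add: dist_commute)
        have dqm: "dist (Y x) q = dist q m" if "t = 0" using t that gamma0 by (simp add: dist_commute)
        show "H x \<le> G x" unfolding H_def G_def Lst_def A0_def Am_def Ap_def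
          using xs pt dYm eqm d1 d2 dqm s0 h0 unfolding L_def
          by (cases "t < 0"; cases "t = 0"; cases "t \<le> h + s") (auto simp: indicator_def)
      qed
    qed
    have "integral\<^sup>L M H \<le> integral\<^sup>L M G" by (rule integral_mono_AE[OF Hi Gi AEle])
    moreover have "integral\<^sup>L M H = dist q m * measure M A0 + s * (measure M Am - measure M Ap) + integral\<^sup>L M Lst"
    proof -
      have "integral\<^sup>L M H = integral\<^sup>L M (\<lambda>\<omega>. dist q m * indicator A0 \<omega> + s * indicator Am \<omega> - s * indicator Ap \<omega>) + integral\<^sup>L M Lst"
        unfolding H_def by (rule Bochner_Integration.integral_add[OF Bochner_Integration.integrable_diff[OF Bochner_Integration.integrable_add[OF i1 i2] i3] Li])
      also have "integral\<^sup>L M (\<lambda>\<omega>. dist q m * indicator A0 \<omega> + s * indicator Am \<omega> - s * indicator Ap \<omega>)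
          = integral\<^sup>L M (\<lambda>\<omega>. dist q m * indicator A0 \<omega> + s * indicator Am \<omega>) - integral\<^sup>L M (\<lambda>\<omega>. s * indicator Ap \<omega> :: real)"
        by (rule Bochner_Integration.integral_diff[OF Bochner_Integration.integrable_add[OF i1 i2] i3])
      also have "integral\<^sup>L M (\<lambda>\<omega>. dist q m * indicator A0 \<omega> + s * indicator Am \<omega> :: real)
          = integral\<^sup>L M (\<lambda>\<omega>. dist q m * indicator A0 \<omega> :: real) + integral\<^sup>L M (\<lambda>\<omega>. s * indicator Am \<omega> :: real)"
        by (rule Bochner_Integration.integral_add[OF i1 i2])
      also have "A0 \<inter> space M = A0" "Am \<inter> space M = Am" "Ap \<inter> space M = Ap" unfolding A0_def Am_def Ap_def by auto
      ultimately show ?thesis by (simp add: algebra_simps)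
    qed
    ultimately show "P.expectation (\<lambda>\<omega>. dist (Y \<omega>) q - dist (Y \<omega>) m)
        \<ge> dist q m * P.prob {\<omega>\<in>space M. Y \<omega> = m}
          + dist p m * (P.prob {\<omega>\<in>space M. inv_into I \<gamma> (Y \<omega>) < 0}
                        - P.prob {\<omega>\<in>space M. inv_into I \<gamma> (Y \<omega>) > 0})
          + P.expectation (\<lambda>\<omega>.
              (dist q p + dist p m - dist (Y \<omega>) m)
              * indicator {0<..dist q p + dist p m} (inv_into I \<gamma> (Y \<omega>)))"
      unfolding G_def Lst_def A0_def Am_def Ap_def L_def h_def \<phi>_def dpm by simp
  qed
qed

end
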